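(* Let $\Omega\subset\mathbb{R}^n$ be open, $\omega$ a weight, $1\le p<q<\infty$, $a\in L^\infty(\Omega)$ non-negative, and $\varphi(x,t)=t^p+a(x)t^q$. Then $\varphi$ satisfies (A0), (A2)$_\omega$ and (Inc)$_p$.
   Context: A weight is a nonnegative locally integrable function $\omega$ on $\mathbb{R}^n$; $L^1(\Omega,\omega)$ is the set of measurable $h$ with $\int_\Omega|h|\omega\,dx<\infty$. (A0): there is $\beta_0\in(0,1]$ with $\varphi(x,\beta_0)\le1\le\varphi(x,1/\beta_0)$ for a.e. $x\in\Omega$. (A2)$_\omega$: for every $s>0$ there exist $\beta_2\in(0,1]$ and $h\in L^1(\Omega,\omega)\cap L^\infty(\Omega)$, $h\ge0$, such that $\varphi(x,\beta_2t)\le\varphi(y,t)+h(x)+h(y)$ for a.e. $x,y\in\Omega$ whenever $\varphi(y,t)\in[0,s]$. (Inc)$_p$: for a.e. $x$, $t\mapsto\varphi(x,t)/t^p$ is increasing on $(0,\infty)$. *)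

theory Defs
  imports "HOL-Analysis.Analysis"
begin

definition weight :: "('a::euclidean_space \<Rightarrow> real) \<Rightarrow> bool" where
  "weight \<omega> \<longleftrightarrow> (\<forall>x. 0 \<le> \<omega> x) \<and> (\<forall>K. compact K \<longrightarrow> set_integrable lebesgue K \<omega>)"

definition Linf_on :: "'a::euclidean_space set \<Rightarrow> ('a \<Rightarrow> real) \<Rightarrow> bool" where
  "Linf_on \<Omega> f \<longleftrightarrow> set_borel_measurable lebesgue \<Omega> f \<and>
     (\<exists>C. AE x in lebesgue. x \<in> \<Omega> \<longrightarrow> \<bar>f x\<bar> \<le> C)"

definition L1w_on :: "'a::euclidean_space set \<Rightarrow> ('a \<Rightarrow> real) \<Rightarrow> ('a \<Rightarrow> real) \<Rightarrow> bool" where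
  "L1w_on \<Omega> \<omega> h \<longleftrightarrow> set_borel_measurable lebesgue \<Omega> h \<and>
     (\<integral>\<^sup>+x\<in>\<Omega>. ennreal (\<bar>h x\<bar> * \<omega> x) \<partial>lebesgue) < \<infinity>"

definition cond_A0 :: "'a::euclidean_space set \<Rightarrow> ('a \<Rightarrow> real \<Rightarrow> real) \<Rightarrow> bool" where
  "cond_A0 \<Omega> \<phi> \<longleftrightarrow> (\<exists>\<beta>0. 0 < \<beta>0 \<and> \<beta>0 \<le> 1 \<and>
     (AE x in lebesgue. x \<in> \<Omega> \<longrightarrow> \<phi> x \<beta>0 \<le> 1 \<and> 1 \<le> \<phi> x (1 / \<beta>0)))"

definition cond_A2w :: "'a::euclidean_space set \<Rightarrow> ('a \<Rightarrow> real) \<Rightarrow> ('a \<Rightarrow> real \<Rightarrow> real) \<Rightarrow> bool" where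
  "cond_A2w \<Omega> \<omega> \<phi> \<longleftrightarrow> (\<forall>s>0. \<exists>\<beta>2 h. 0 < \<beta>2 \<and> \<beta>2 \<le> 1 \<and>
     L1w_on \<Omega> \<omega> h \<and> Linf_on \<Omega> h \<and> (\<forall>x\<in>\<Omega>. 0 \<le> h x) \<and>
     (\<exists>N \<in> null_sets lebesgue. \<forall>x\<in>\<Omega> - N. \<forall>y\<in>\<Omega> - N. \<forall>t\<ge>0.
        0 \<le> \<phi> y t \<and> \<phi> y t \<le> s \<longrightarrow> \<phi> x (\<beta>2 * t) \<le> \<phi> y t + h x + h y))"

definition cond_Inc :: "'a::euclidean_space set \<Rightarrow> real \<Rightarrow> ('a \<Rightarrow> real \<Rightarrow> real) \<Rightarrow> bool" where
  "cond_Inc \<Omega> p \<phi> \<longleftrightarrow> (AE x in lebesgue. x \<in> \<Omega> \<longrightarrow>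
     mono_on {0<..} (\<lambda>t. \<phi> x t / t powr p))"

end

theory Submission
  imports Defs
begin

lemma small_powr_le:
  fixes b r :: real
  assumes "0 \<le> b" "b \<le> 1" "1 \<le> r"
  shows "b powr r \<le> b"
  using powr_mono'[of 1 r b] assms by simp

lemma a2_point:
  fixes p q s K ax ay t :: real
  assumes p: "1 \<le> p" and pq: "p < q" and ax: "0 \<le> ax" "ax \<le> K" and ay: "0 \<le> ay"
    and t: "0 \<le> t" and s: "t powr p + ay * t powr q \<le> s"
  shows "(1 / (1 + K * s powr ((q - p) / p)) * t) powr p
          + ax * (1 / (1 + K * s powr ((q - p) / p)) * t) powr q
         \<le> t powr p + ay * t powr q"
proof -
  define M where "M = s powr ((q - p) / p)"
  define b where "b = 1 / (1 + K * M)"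
  have K: "0 \<le> K" using ax by linarith
  have M0: "0 \<le> M" unfolding M_def by simp
  have KM: "0 \<le> K * M" using K M0 by simp
  have b0: "0 < b" "b \<le> 1" unfolding b_def using KM by auto
  have tp0: "0 \<le> t powr p" by simp
  have tq0: "0 \<le> t powr q" by simp
  have tps: "t powr p \<le> s" using s ay tq0 by (smt (verit) mult_nonneg_nonneg)
  have "t powr (q - p) = (t powr p) powr ((q - p) / p)"
    using p by (simp add: powr_powr)
  also have "\<dots> \<le> M" unfolding M_def using tps pq p by (intro powr_mono2) auto
  finally have tqp: "t powr (q - p) \<le> M" .
  have tq: "t powr q = t powr p * t powr (q - p)"
    by (simp add: powr_add[symmetric])
  have tqM: "t powr q \<le> t powr p * M" using tq tqp tp0 by (simp add: mult_left_mono)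
  have e1: "(b * t) powr p = b powr p * t powr p" using b0 t by (simp add: powr_mult)
  have e2: "(b * t) powr q = b powr q * t powr q" using b0 t by (simp add: powr_mult)
  have bp: "b powr p \<le> b" using small_powr_le b0 p by simp
  have bq: "b powr q \<le> b" using small_powr_le b0 p pq by simp
  have "(b * t) powr p + ax * (b * t) powr q \<le> b * t powr p + K * (b * t powr q)"
    unfolding e1 e2
  proof (rule add_mono)
    show "b powr p * t powr p \<le> b * t powr p" using bp tp0 by (simp add: mult_right_mono)
    have "b powr q * t powr q \<le> b * t powr q" using bq tq0 by (simp add: mult_right_mono)
    moreover have "0 \<le> b powr q * t powr q" by simp
    ultimately show "ax * (b powr q * t powr q) \<le> K * (b * t powr q)"
      using ax by (meson mult_mono order_trans)
  qed
  also have "\<dots> \<le> b * t powr p + K * (b * (t powr p * M))"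
    using tqM K b0 by (simp add: mult_left_mono)
  also have "\<dots> = b * (1 + K * M) * t powr p" by (simp add: algebra_simps)
  also have "\<dots> = t powr p" unfolding b_def using KM by simp
  also have "\<dots> \<le> t powr p + ay * t powr q" using ay tq0 by simp
  finally show ?thesis unfolding b_def M_def .
qed

theorem lemma5p8:
  fixes \<Omega> :: "'a::euclidean_space set" and \<omega> a :: "'a \<Rightarrow> real" and p q :: real
    and \<phi> :: "'a \<Rightarrow> real \<Rightarrow> real"
  assumes "open \<Omega>" and "weight \<omega>" and "1 \<le> p" and "p < q"
    and "Linf_on \<Omega> a" and "AE x in lebesgue. x \<in> \<Omega> \<longrightarrow> 0 \<le> a x"
    and "\<And>x t. \<phi> x t = t powr p + a x * t powr q"
  shows "cond_A0 \<Omega> \<phi> \<and> cond_A2w \<Omega> \<omega> \<phi> \<and> cond_Inc \<Omega> p \<phi>"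
proof -
  note phi = assms(7)
  obtain C where C: "AE x in lebesgue. x \<in> \<Omega> \<longrightarrow> \<bar>a x\<bar> \<le> C"
    using assms(5) unfolding Linf_on_def by blast
  define K where "K = \<bar>C\<bar>"
  have K0: "0 \<le> K" unfolding K_def by simp
  have AEa: "AE x in lebesgue. x \<in> \<Omega> \<longrightarrow> 0 \<le> a x \<and> a x \<le> K"
    using C assms(6) unfolding K_def by eventually_elim auto
  have A0: "cond_A0 \<Omega> \<phi>"
    unfolding cond_A0_def
  proof (intro exI conjI)
    define b where "b = 1 / (2 * (1 + K))"
    show b0: "0 < b" "b \<le> 1" unfolding b_def using K0 by auto
    show "AE x in lebesgue. x \<in> \<Omega> \<longrightarrow> \<phi> x b \<le> 1 \<and> 1 \<le> \<phi> x (1 / b)"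
      using AEa
    proof eventually_elim
      case (elim x)
      show ?case
      proof (intro impI conjI)
        assume x: "x \<in> \<Omega>"
        have bp: "b powr p \<le> b" using small_powr_le b0 assms(3) by simp
        have bq: "b powr q \<le> b" using small_powr_le b0 assms(3,4) by simp
        have "a x * b powr q \<le> K * b" using elim x bq b0
          by (meson mult_mono order_trans powr_ge_zero less_imp_le)
        also have "K * b < 1 / 2" unfolding b_def using K0 by (simp add: field_simps)
        finally have "a x * b powr q < 1/2" .
        moreover have "b \<le> 1/2" unfolding b_def using K0 by (simp add: field_simps)
        ultimately show "\<phi> x b \<le> 1" using phi bp by simp
        have "1 \<le> (1 / b) powr p" using b0 assms(3)
          by (intro ge_one_powr_ge_zero) auto
        moreover have "0 \<le> a x * (1 / b) powr q" using elim x by simp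
        ultimately show "1 \<le> \<phi> x (1 / b)" using phi by simp
      qed
    qed
  qed
  have Inc: "cond_Inc \<Omega> p \<phi>"
    unfolding cond_Inc_def using AEa
  proof eventually_elim
    case (elim x)
    show ?case
    proof (intro impI)
      assume x: "x \<in> \<Omega>"
      have eq: "\<phi> x t / t powr p = 1 + a x * t powr (q - p)" if "0 < t" for t
        using that by (simp add: phi powr_diff field_simps)
      show "mono_on {0<..} (\<lambda>t. \<phi> x t / t powr p)"
      proof (rule mono_onI)
        fix r t :: real assume "r \<in> {0<..}" "t \<in> {0<..}" "r \<le> t"
        then show "\<phi> x r / r powr p \<le> \<phi> x t / t powr p"
          using eq elim x assms(4)
          by (simp add: mult_left_mono powr_mono2)
      qed
    qed
  qed
  have A2: "cond_A2w \<Omega> \<omega> \<phi>"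
    unfolding cond_A2w_def
  proof (intro allI impI)
    fix s :: real assume s: "s > 0"
    define b where "b = 1 / (1 + K * s powr ((q - p) / p))"
    have KM: "0 \<le> K * s powr ((q - p) / p)" using K0 by simp
    obtain N where N: "{x \<in> space lebesgue. \<not> (x \<in> \<Omega> \<longrightarrow> 0 \<le> a x \<and> a x \<le> K)} \<subseteq> N"
      "emeasure lebesgue N = 0" "N \<in> sets lebesgue"
      using AEa by (rule AE_E)
    have Nn: "N \<in> null_sets lebesgue" using N by (simp add: null_setsI)
    have good: "0 \<le> a x \<and> a x \<le> K" if "x \<in> \<Omega> - N" for x using N(1) that by auto
    show "\<exists>\<beta>2 h. 0 < \<beta>2 \<and> \<beta>2 \<le> 1 \<and>
     L1w_on \<Omega> \<omega> h \<and> Linf_on \<Omega> h \<and> (\<forall>x\<in>\<Omega>. 0 \<le> h x) \<and>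
     (\<exists>N \<in> null_sets lebesgue. \<forall>x\<in>\<Omega> - N. \<forall>y\<in>\<Omega> - N. \<forall>t\<ge>0.
        0 \<le> \<phi> y t \<and> \<phi> y t \<le> s \<longrightarrow> \<phi> x (\<beta>2 * t) \<le> \<phi> y t + h x + h y)"
    proof (intro exI conjI ballI allI impI bexI[OF _ Nn])
      show "0 < b" "b \<le> 1" unfolding b_def using KM by auto
      show "L1w_on \<Omega> \<omega> (\<lambda>_. 0)" unfolding L1w_on_def set_borel_measurable_def by simp
      show "Linf_on \<Omega> (\<lambda>_. 0)" unfolding Linf_on_def set_borel_measurable_def by (simp add: exI[of _ 0])
      show "0 \<le> (0::real)" by simp
    next
      fix x y t assume x: "x \<in> \<Omega> - N" and y: "y \<in> \<Omega> - N" and t: "0 \<le> t"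
        and h: "0 \<le> \<phi> y t \<and> \<phi> y t \<le> s"
      show "\<phi> x (b * t) \<le> \<phi> y t + 0 + 0"
        using a2_point[OF assms(3,4) _ _ _ t, of "a x" K "a y" s] good[OF x] good[OF y] h
        unfolding b_def phi by simp
    qed
  qed
  show ?thesis using A0 A2 Inc by blast
qed

end
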